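(* Let $X_1,\dots,X_n$ be i.i.d. copies of a non-negative absolutely continuous random variable $X$, and let $1\le k\le n$. Let $\tau_{k|n}(\mathbf X)$ be the lifetime of the $k$-out-of-$n$ system with component lifetimes $X_1,\dots,X_n$, $(\tau_{k|n}(\mathbf X))_t=(\tau_{k|n}(\mathbf X)-t\mid\tau_{k|n}(\mathbf X)>t)$, and $\tau_{k|n}(\mathbf X_t)$ the lifetime of the $k$-out-of-$n$ system built from independent used components with lifetimes distributed as $(X_i-t\mid X_i>t)$. Then for any fixed $t\ge0$, $\tau_{k|n}(\mathbf X_t)\underset{c}{\prec}(\tau_{k|n}(\mathbf X))_t$.
   Context: All random variables are non-negative and absolutely continuous with support $[0,\infty)$. For a random variable $W$: density $f_W$, survival $\bar F_W$, hazard rate $r_W=f_W/\bar F_W$. $U\underset{c}{\prec}V$ means $r_U(x)/r_V(x)$ is increasing (non-decreasing) in $x\ge0$. A $k$-out-of-$n$ system functions as long as at least $k$ of its $n$ components function. *)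

theory Defs
  imports "HOL-Probability.Probability"
begin

definition surv :: "'a measure \<Rightarrow> ('a \<Rightarrow> real) \<Rightarrow> real \<Rightarrow> real" where
  "surv M W x = measure M {\<omega> \<in> space M. x < W \<omega>}"

definition resid_surv :: "'a measure \<Rightarrow> ('a \<Rightarrow> real) \<Rightarrow> real \<Rightarrow> real \<Rightarrow> real" where
  "resid_surv M W t x =
     measure M {\<omega> \<in> space M. t + x < W \<omega> \<and> t < W \<omega>} / measure M {\<omega> \<in> space M. t < W \<omega>}"

definition kofn_life :: "nat \<Rightarrow> nat \<Rightarrow> (nat \<Rightarrow> real) \<Rightarrow> real" where
  "kofn_life k n x = Sup {s. k \<le> card {i. i < n \<and> s < x i}}"

definition kofn_rv :: "nat \<Rightarrow> nat \<Rightarrow> (nat \<Rightarrow> 'a \<Rightarrow> real) \<Rightarrow> 'a \<Rightarrow> real" where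
  "kofn_rv k n X = (\<lambda>\<omega>. kofn_life k n (\<lambda>i. X i \<omega>))"

definition dens_of_surv :: "(real \<Rightarrow> real) \<Rightarrow> real \<Rightarrow> real" where
  "dens_of_surv G x = - (THE D. (G has_real_derivative D) (at_right x))"

definition hazard :: "(real \<Rightarrow> real) \<Rightarrow> real \<Rightarrow> real" where
  "hazard G x = dens_of_surv G x / G x"

text \<open>U <_c V (given by survival functions): r_U / r_V is non-decreasing on [0,\<infinity>).\<close>
definition c_order :: "(real \<Rightarrow> real) \<Rightarrow> (real \<Rightarrow> real) \<Rightarrow> bool" where
  "c_order GU GV \<longleftrightarrow> mono_on {0..} (\<lambda>x. hazard GU x / hazard GV x)"

end

theory Submission
  imports Defs
begin


definition Hf :: "nat \<Rightarrow> nat \<Rightarrow> real \<Rightarrow> real" where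
  "Hf n k q = (\<Sum>j=k..n. real (n choose j) * q^j * (1-q)^(n-j))"
definition gf :: "nat \<Rightarrow> real \<Rightarrow> nat \<Rightarrow> real" where
  "gf n q j = real n * real ((n-1) choose (j-1)) * q^(j-1) * (1-q)^(n-j)"
definition hf :: "nat \<Rightarrow> nat \<Rightarrow> real \<Rightarrow> real" where
  "hf n k q = real n * real ((n-1) choose (k-1)) * q^(k-1) * (1-q)^(n-k)"

lemma term_deriv:
  assumes "1 \<le> j" "j \<le> n"
  shows "((\<lambda>q. real (n choose j) * q^j * (1-q)^(n-j)) has_real_derivative (gf n q j - gf n q (Suc j))) (at q)"
proof -
  have e1: "real (n choose j) * real j = real n * real ((n-1) choose (j-1))"
  proof -
    have "(n choose j) * j = n * ((n-1) choose (j-1))"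
      using assms by (metis One_nat_def Suc_pred binomial_absorb_comp less_eq_Suc_le times_binomial_minus1_eq mult.commute)
    then show ?thesis by (metis of_nat_mult)
  qed
  show ?thesis
  proof (cases "j = n")
    case True
    have "gf n q (Suc j) = 0" using True assms by (auto simp add: gf_def)
    moreover have "gf n q j = real (n choose j) * (real j * q^(j-1))"
      using True e1 by (simp add: gf_def)
    ultimately show ?thesis using True
      by (auto intro!: derivative_eq_intros)
  next
    case False
    then have jn: "j < n" using assms by simp
    have e2: "real (n choose j) * real (n-j) = real n * real ((n-1) choose j)"
    proof -
      have "(n choose j) * (n-j) = n * ((n-1) choose j)"
        using jn by (metis binomial_absorb_comp mult.commute)
      then show ?thesis by (metis of_nat_mult)
    qed
    have g1: "gf n q j = real (n choose j) * real j * q^(j-1) * (1-q)^(n-j)"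
      using e1 by (simp add: gf_def)
    have g2: "gf n q (Suc j) = real (n choose j) * real (n-j) * q^j * (1-q)^(n - Suc j)"
      using e2 by (simp add: gf_def)
    show ?thesis unfolding g1 g2
      by (rule derivative_eq_intros refl)+ (simp add: algebra_simps)
  qed
qed


lemma H_deriv:
  assumes "1 \<le> k" "k \<le> n"
  shows "(Hf n k has_real_derivative hf n k q) (at q)"
proof -
  have "(Hf n k has_real_derivative (\<Sum>j=k..n. gf n q j - gf n q (Suc j))) (at q)"
    unfolding Hf_def[abs_def]
    by (rule DERIV_sum) (use term_deriv assms in auto)
  moreover have "(\<Sum>j=k..n. gf n q j - gf n q (Suc j)) = gf n q k - gf n q (Suc n)"
  proof -
    have "(\<Sum>j=k..n. gf n q (Suc j) - gf n q j) = gf n q (Suc n) - gf n q k"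
      using assms by (intro sum_Suc_diff) auto
    then show ?thesis by (simp add: sum_subtractf)
  qed
  moreover have "gf n q (Suc n) = 0" using assms by (simp add: gf_def)
  moreover have "gf n q k = hf n k q" by (simp add: gf_def hf_def)
  ultimately show ?thesis by simp
qed

lemma H_pos:
  assumes "k \<le> n" "0 < q" "q \<le> 1"
  shows "0 < Hf n k q"
proof -
  have "real (n choose n) * q^n * (1-q)^(n-n) \<le> Hf n k q"
    unfolding Hf_def using assms
    by (intro member_le_sum) auto
  moreover have "0 < real (n choose n) * q^n * (1-q)^(n-n)" using assms by simp
  ultimately show ?thesis by linarith
qed

definition Pz :: "nat \<Rightarrow> nat \<Rightarrow> real \<Rightarrow> real" where
  "Pz n k z = (\<Sum>j=k..n. real (n choose j) * z^(j-k))"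

lemma H_eq:
  assumes "k \<le> n" "0 < q" "q < 1"
  shows "Hf n k q = q^k * (1-q)^(n-k) * Pz n k (q/(1-q))"
  unfolding Hf_def Pz_def sum_distrib_left
proof (rule sum.cong[OF refl])
  fix j assume j: "j \<in> {k..n}"
  have a: "q^j = q^k * q^(j-k)" using j by (simp flip: power_add)
  have b: "(1-q)^(n-k) = (1-q)^(n-j) * (1-q)^(j-k)" using j by (simp flip: power_add)
  have c: "(q/(1-q))^(j-k) = q^(j-k) / (1-q)^(j-k)" by (simp add: power_divide)
  have "(1-q)^(j-k) > 0" using assms by simp
  then show "real (n choose j) * q ^ j * (1 - q) ^ (n - j) =
         q ^ k * (1 - q) ^ (n - k) * (real (n choose j) * (q / (1 - q)) ^ (j - k))"
    unfolding a b c using assms by (simp add: field_simps)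
qed

lemma pow_pair:
  fixes r z z' :: real
  assumes "1 \<le> r" "0 < z" "z \<le> z'"
  shows "0 \<le> (r^a - r^b) * (z'^a * z^b - z^a * z'^b)"
proof -
  have key: "0 \<le> (r^a - r^b) * (z'^a * z^b - z^a * z'^b)" if "b \<le> a" for a b
  proof -
    have "r^b \<le> r^a" using that assms by (intro power_increasing) auto
    moreover have "z^a * z'^b \<le> z'^a * z^b"
    proof -
      have "z^(a-b) \<le> z'^(a-b)" using assms by (intro power_mono) auto
      then have "z^b * z'^b * z^(a-b) \<le> z^b * z'^b * z'^(a-b)"
        using assms by (intro mult_left_mono) auto
      moreover have "z^a = z^b * z^(a-b)" "z'^a = z'^b * z'^(a-b)"
        using that by (simp_all flip: power_add)
      ultimately show ?thesis by (simp add: ac_simps)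
    qed
    ultimately show ?thesis by simp
  qed
  show ?thesis
  proof (cases "b \<le> a")
    case True then show ?thesis by (rule key)
  next
    case False
    then have "0 \<le> (r^b - r^a) * (z'^b * z^a - z^b * z'^a)" by (intro key) auto
    then show ?thesis by (simp add: algebra_simps)
  qed
qed

lemma mlr:
  fixes a :: "nat \<Rightarrow> real" and e :: "nat \<Rightarrow> nat"
  assumes "finite J" "\<And>j. j \<in> J \<Longrightarrow> 0 \<le> a j" "1 \<le> r" "0 < z" "z \<le> z'"
  shows "(\<Sum>i\<in>J. a i * (z*r)^e i) * (\<Sum>j\<in>J. a j * z'^e j)
       \<le> (\<Sum>i\<in>J. a i * (z'*r)^e i) * (\<Sum>j\<in>J. a j * z^e j)"
proof -
  define w where "w i j = a i * a j * r^e i * (z'^e i * z^e j - z^e i * z'^e j)" for i j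
  have D: "(\<Sum>i\<in>J. a i * (z'*r)^e i) * (\<Sum>j\<in>J. a j * z^e j)
       - (\<Sum>i\<in>J. a i * (z*r)^e i) * (\<Sum>j\<in>J. a j * z'^e j) = (\<Sum>i\<in>J. \<Sum>j\<in>J. w i j)"
  proof -
    have "(\<Sum>i\<in>J. a i * (z'*r)^e i) * (\<Sum>j\<in>J. a j * z^e j)
       - (\<Sum>i\<in>J. a i * (z*r)^e i) * (\<Sum>j\<in>J. a j * z'^e j)
      = (\<Sum>i\<in>J. \<Sum>j\<in>J. a i * (z'*r)^e i * (a j * z^e j) - a i * (z*r)^e i * (a j * z'^e j))"
      by (simp add: sum_product sum_subtractf)
    also have "\<dots> = (\<Sum>i\<in>J. \<Sum>j\<in>J. w i j)"
      by (intro sum.cong refl) (simp only: w_def power_mult_distrib algebra_simps)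
    finally show ?thesis .
  qed
  have S: "(\<Sum>i\<in>J. \<Sum>j\<in>J. w i j) = (\<Sum>i\<in>J. \<Sum>j\<in>J. w j i)"
    by (rule sum.swap)
  have "0 \<le> (\<Sum>i\<in>J. \<Sum>j\<in>J. w i j + w j i)"
  proof (intro sum_nonneg)
    fix i j assume "i \<in> J" "j \<in> J"
    have "w i j + w j i = a i * a j * ((r^e i - r^e j) * (z'^e i * z^e j - z^e i * z'^e j))"
      unfolding w_def by (simp only: algebra_simps)
    moreover have "0 \<le> a i * a j" using assms \<open>i \<in> J\<close> \<open>j \<in> J\<close> by simp
    ultimately show "0 \<le> w i j + w j i"
      using pow_pair[OF assms(3-5), of "e i" "e j"] by simp
  qed
  also have "\<dots> = 2 * (\<Sum>i\<in>J. \<Sum>j\<in>J. w i j)"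
    using S by (simp add: sum.distrib)
  finally show ?thesis using D by linarith
qed

lemma Pz_mono:
  assumes "0 \<le> z" "z \<le> z'"
  shows "Pz n k z \<le> Pz n k z'"
  unfolding Pz_def using assms
  by (intro sum_mono mult_left_mono power_mono) auto

lemma Pz_pos:
  assumes "k \<le> n" "0 \<le> z"
  shows "0 < Pz n k z"
proof -
  have "real (n choose k) * z^(k-k) \<le> Pz n k z"
    unfolding Pz_def using assms by (intro member_le_sum) auto
  moreover have "0 < real (n choose k) * z^(k-k)" using assms by simp
  ultimately show ?thesis by linarith
qed

lemma Pz_nonneg:
  assumes "0 \<le> z"
  shows "0 \<le> Pz n k z"
  unfolding Pz_def using assms by (intro sum_nonneg) auto

lemma Pz_mlr:
  assumes "1 \<le> r" "r \<le> r'" "0 < z" "z \<le> z'"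
  shows "Pz n k (z*r) * Pz n k z' \<le> Pz n k (z'*r') * Pz n k z"
proof -
  have "Pz n k (z*r) * Pz n k z' \<le> Pz n k (z'*r) * Pz n k z"
    unfolding Pz_def using mlr[of "{k..n}" "\<lambda>j. real (n choose j)" r z z' "\<lambda>j. j - k"] assms
    by simp
  also have "\<dots> \<le> Pz n k (z'*r') * Pz n k z"
    using assms Pz_nonneg[of z n k] by (intro mult_right_mono Pz_mono) auto
  finally show ?thesis .
qed


definition Phi :: "nat \<Rightarrow> nat \<Rightarrow> real \<Rightarrow> real \<Rightarrow> real" where
  "Phi n k c p = (hf n k (p/c) / (c * Hf n k (p/c))) / (hf n k p / Hf n k p)"

lemma hf_nonneg: "0 \<le> q \<Longrightarrow> q \<le> 1 \<Longrightarrow> 0 \<le> hf n k q"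
  unfolding hf_def by simp

lemma Phi_nonneg:
  assumes "k \<le> n" "0 < c" "c \<le> 1" "0 < p" "p \<le> c"
  shows "0 \<le> Phi n k c p"
proof -
  have "p \<le> 1" "p/c \<le> 1" "0 < p/c" using assms by (auto simp: field_simps)
  then show ?thesis unfolding Phi_def
    using hf_nonneg[of p n k] hf_nonneg[of "p/c" n k] H_pos[of k n p] H_pos[of k n "p/c"] assms
    by (intro divide_nonneg_nonneg mult_nonneg_nonneg) auto
qed

lemma Phi_kn:
  assumes "1 \<le> n" "0 < c" "0 < p"
  shows "Phi n n c p = 1"
proof -
  have h: "hf n n q = real n * q^(n-1)" for q by (simp add: hf_def)
  have H: "Hf n n q = q^n" for q by (simp add: Hf_def)
  have pn: "q^n = q * q^(n-1)" for q :: real using assms by (simp flip: power_Suc)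
  show ?thesis unfolding Phi_def h H pn using assms by (simp add: field_simps)
qed

lemma Phi_at_c:
  assumes "k < n" "1 \<le> k" "0 < c"
  shows "Phi n k c c = 0"
  using assms by (simp add: Phi_def hf_def)

lemma Phi_lt:
  assumes "1 \<le> k" "k \<le> n" "0 < c" "c \<le> 1" "0 < p" "p < c"
  shows "Phi n k c p = Pz n k (p/(1-p)) / Pz n k ((p/c)/(1-p/c))"
proof -
  define q where "q = p/c"
  have q: "0 < q" "q < 1" "p < 1" using assms by (auto simp: q_def field_simps)
  have K: "0 < real n * real ((n-1) choose (k-1))" using assms by simp
  have hq: "hf n k x = real n * real ((n-1) choose (k-1)) * x^(k-1) * (1-x)^(n-k)" for x
    by (simp add: hf_def)
  have pk: "x^k = x * x^(k-1)" for x :: real using assms by (simp flip: power_Suc)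
  have Pp: "0 < Pz n k (p/(1-p))" "0 < Pz n k (q/(1-q))"
    using q assms by (auto intro!: Pz_pos)
  have "Phi n k c p = (hf n k q / (c * Hf n k q)) / (hf n k p / Hf n k p)"
    by (simp add: Phi_def q_def)
  also have "\<dots> = Pz n k (p/(1-p)) / Pz n k (q/(1-q))"
    unfolding H_eq[OF assms(2) q(1,2)] H_eq[OF assms(2) assms(5) q(3)] hq pk
    using q K Pp assms by (simp add: field_simps q_def)
  finally show ?thesis by (simp add: q_def)
qed

lemma Phi_anti:
  assumes "1 \<le> k" "k \<le> n" "0 < c" "c \<le> 1" "0 < p'" "p' \<le> p" "p \<le> c"
  shows "Phi n k c p \<le> Phi n k c p'"
proof (cases "k = n")
  case True
  then show ?thesis using assms Phi_kn[of n c p] Phi_kn[of n c p'] by simp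
next
  case False
  then have kn: "k < n" using assms by simp
  show ?thesis
  proof (cases "p = c")
    case True
    then show ?thesis using Phi_at_c[OF kn assms(1,3)] Phi_nonneg[of k n c p'] assms by simp
  next
    case False
    then have pc: "p < c" using assms by simp
    have p'c: "p' < c" using pc assms by simp
    define z where "z = p'/(1-p')"
    define z' where "z' = p/(1-p)"
    define r where "r = (1-p')/(c-p')"
    define r' where "r' = (1-p)/(c-p)"
    have lt1: "p < 1" "p' < 1" using pc assms by auto
    have zpos: "0 < z" using assms lt1 by (simp add: z_def)
    have zz: "z \<le> z'" unfolding z_def z'_def using assms lt1
      by (simp add: field_simps)
    have r1: "1 \<le> r" unfolding r_def using assms p'c by (simp add: field_simps)
    have rr: "r \<le> r'" unfolding r_def r'_def using assms pc p'c
    proof -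
      have "(1-p')*(c-p) \<le> (1-p)*(c-p')"
      proof -
        have "(1-p')*(c-p) - (1-p)*(c-p') = (p - p')*(c - 1)" by (simp add: algebra_simps)
        also have "\<dots> \<le> 0" using assms by (intro mult_nonneg_nonpos) auto
        finally show ?thesis by simp
      qed
      then show "(1-p')/(c-p') \<le> (1-p)/(c-p)" using pc p'c by (simp add: field_simps)
    qed
    have e1: "z * r = (p'/c)/(1-p'/c)"
    proof -
      have a: "1 - p' \<noteq> 0" "c - p' \<noteq> 0" using lt1 p'c by auto
      have "z * r = p'/(c-p')" unfolding z_def r_def using a by simp
      moreover have "(p'/c)/(1-p'/c) = p'/(c-p')" using assms a by (simp add: field_simps)
      ultimately show ?thesis by linarith
    qed
    have e2: "z' * r' = (p/c)/(1-p/c)"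
    proof -
      have a: "1 - p \<noteq> 0" "c - p \<noteq> 0" using lt1 pc by auto
      have "z' * r' = p/(c-p)" unfolding z'_def r'_def using a by simp
      moreover have "(p/c)/(1-p/c) = p/(c-p)" using assms a by (simp add: field_simps)
      ultimately show ?thesis by linarith
    qed
    have M: "Pz n k (z*r) * Pz n k z' \<le> Pz n k (z'*r') * Pz n k z"
      by (rule Pz_mlr[OF r1 rr zpos zz])
    have pos: "0 < Pz n k (z*r)" "0 < Pz n k (z'*r')"
      using zpos r1 rr zz assms by (auto intro!: Pz_pos)
    have "Phi n k c p = Pz n k z' / Pz n k (z'*r')"
      unfolding e2 unfolding z'_def using assms by (intro Phi_lt[OF assms(1-4) _ pc]) auto
    also have "\<dots> \<le> Pz n k z / Pz n k (z*r)"
      using M pos by (simp add: divide_simps mult.commute)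
    also have "\<dots> = Phi n k c p'"
      unfolding e1 unfolding z_def using Phi_lt[OF assms(1-4) assms(5) p'c] by simp
    finally show ?thesis .
  qed
qed



lemma kofn_life_gt:
  assumes "1 \<le> k" "k \<le> n"
  shows "(s < kofn_life k n x) \<longleftrightarrow> k \<le> card {i. i < n \<and> s < x i}"
proof -
  define T where "T = {s. k \<le> card {i. i < n \<and> s < x i}}"
  have fin: "finite {i. i < n \<and> s < x i}" for s by simp
  have mono: "s' \<in> T" if "s \<in> T" "s' \<le> s" for s s'
  proof -
    have "{i. i < n \<and> s < x i} \<subseteq> {i. i < n \<and> s' < x i}" using that by auto
    then have "card {i. i < n \<and> s < x i} \<le> card {i. i < n \<and> s' < x i}"
      by (intro card_mono) auto
    then show ?thesis using that unfolding T_def by auto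
  qed
  have ne: "n \<noteq> 0" using assms by simp
  define mx where "mx = Max (x ` {..<n})"
  have bdd: "bdd_above T"
  proof (rule bdd_aboveI)
    fix s assume "s \<in> T"
    then have "k \<le> card {i. i < n \<and> s < x i}" by (simp add: T_def)
    then have "{i. i < n \<and> s < x i} \<noteq> {}"
    proof (intro notI)
      assume a1: "k \<le> card {i. i < n \<and> s < x i}" and a2: "{i. i < n \<and> s < x i} = {}"
      have "card {i. i < n \<and> s < x i} = 0" by (subst a2) simp
      then show False using a1 assms by linarith
    qed
    then obtain i where "i < n" "s < x i" by auto
    moreover have "x i \<le> mx" unfolding mx_def using \<open>i < n\<close> by (intro Max_ge) auto
    ultimately show "s \<le> mx" by simp
  qed
  define mn where "mn = Min (x ` {..<n})"
  have "mn - 1 \<in> T"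
  proof -
    have "x i \<ge> mn" if "i < n" for i unfolding mn_def using that by (intro Min_le) auto
    then have "{i. i < n \<and> mn - 1 < x i} = {..<n}" by force
    then show ?thesis unfolding T_def using assms by simp
  qed
  then have Tne: "T \<noteq> {}" by auto
  have kl: "kofn_life k n x = Sup T" unfolding kofn_life_def T_def by simp
  show ?thesis
  proof
    assume "s < kofn_life k n x"
    then have "s < Sup T" by (simp add: kl)
    then obtain s' where "s' \<in> T" "s < s'" using less_cSup_iff[OF Tne bdd] by auto
    then have "s \<in> T" using mono by auto
    then show "k \<le> card {i. i < n \<and> s < x i}" by (simp add: T_def)
  next
    assume a: "k \<le> card {i. i < n \<and> s < x i}"
    define A where "A = {i. i < n \<and> s < x i}"
    have Ane: "A \<noteq> {}"
    proof (intro notI)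
      assume "A = {}" then have "card A = 0" by simp
      then show False using a assms unfolding A_def by linarith
    qed
    have Afin: "finite A" unfolding A_def by simp
    define m where "m = Min (x ` A)"
    have sm: "s < m" unfolding m_def using Ane Afin by (auto simp: A_def)
    define s' where "s' = (s + m) / 2"
    have "A \<subseteq> {i. i < n \<and> s' < x i}"
    proof
      fix i assume "i \<in> A"
      then have "m \<le> x i" unfolding m_def using Afin by (intro Min_le) auto
      then show "i \<in> {i. i < n \<and> s' < x i}" using \<open>i \<in> A\<close> sm by (auto simp: A_def s'_def)
    qed
    then have "card A \<le> card {i. i < n \<and> s' < x i}" by (intro card_mono) auto
    then have "s' \<in> T" using a unfolding T_def A_def by simp
    then have "s' \<le> Sup T" using bdd by (intro cSup_upper)
    moreover have "s < s'" using sm by (simp add: s'_def)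
    ultimately show "s < kofn_life k n x" by (simp add: kl)
  qed
qed




lemma prod_if_card:
  assumes "A \<subseteq> {..<n}"
  shows "(\<Prod>i<n. if i \<in> A then q else (1-q::real)) = q^card A * (1-q)^(n - card A)"
proof -
  have fA: "finite A" using assms finite_subset by blast
  have "(\<Prod>i<n. if i \<in> A then q else (1-q::real)) = (\<Prod>i\<in>{..<n} \<inter> {x. x \<in> A}. q) * (\<Prod>i\<in>{..<n} \<inter> - {x. x \<in> A}. 1-q)"
    by (rule prod.If_cases) simp
  moreover have "{..<n} \<inter> {x. x \<in> A} = A" using assms by auto
  moreover have "{..<n} \<inter> - {x. x \<in> A} = {..<n} - A" by auto
  moreover have "card ({..<n} - A) = n - card A" using assms fA by (simp add: card_Diff_subset)
  ultimately show ?thesis by simp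
qed

lemma sum_subsets_binom:
  assumes "k \<le> n"
  shows "(\<Sum>A\<in>{A. A \<subseteq> {..<n} \<and> k \<le> card A}. (q::real)^card A * (1-q)^(n - card A)) = Hf n k q"
proof -
  define S where "S = {A. A \<subseteq> {..<n} \<and> k \<le> card A}"
  have finS: "finite S" unfolding S_def by (rule finite_subset[of _ "Pow {..<n}"]) auto
  have img: "card ` S \<subseteq> {k..n}"
  proof
    fix j assume "j \<in> card ` S"
    then obtain A where "A \<in> S" "j = card A" by auto
    then have "A \<subseteq> {..<n}" "k \<le> card A" by (auto simp: S_def)
    moreover then have "card A \<le> n" using card_mono[of "{..<n}" A] by simp
    ultimately show "j \<in> {k..n}" using \<open>j = card A\<close> by simp
  qed
  have "(\<Sum>A\<in>S. q^card A * (1-q)^(n - card A))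
      = (\<Sum>j\<in>{k..n}. \<Sum>A\<in>{A\<in>S. card A = j}. q^card A * (1-q)^(n - card A))"
    by (rule sum.group[OF finS _ img, symmetric]) simp
  also have "\<dots> = (\<Sum>j\<in>{k..n}. real (n choose j) * q^j * (1-q)^(n - j))"
  proof (rule sum.cong[OF refl])
    fix j assume j: "j \<in> {k..n}"
    have eq: "{A\<in>S. card A = j} = {A. A \<subseteq> {..<n} \<and> card A = j}" using j by (auto simp: S_def)
    have "(\<Sum>A\<in>{A\<in>S. card A = j}. q^card A * (1-q)^(n - card A))
        = (\<Sum>A\<in>{A. A \<subseteq> {..<n} \<and> card A = j}. q^j * (1-q)^(n - j))"
      unfolding eq by (rule sum.cong) auto
    also have "\<dots> = real (card {A. A \<subseteq> {..<n} \<and> card A = j}) * (q^j * (1-q)^(n - j))"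
      by simp
    also have "card {A. A \<subseteq> {..<n} \<and> card A = j} = n choose j"
      using n_subsets[of "{..<n}" j] by simp
    finally show "(\<Sum>A\<in>{A\<in>S. card A = j}. q^card A * (1-q)^(n - card A)) = real (n choose j) * q^j * (1-q)^(n - j)"
      by simp
  qed
  finally show ?thesis unfolding S_def Hf_def .
qed

lemma kofn_surv:
  assumes M: "prob_space M" and ind: "prob_space.indep_vars M (\<lambda>_. borel) Z {..<n}"
    and k: "1 \<le> k" "k \<le> n" and q: "\<forall>i<n. surv M (Z i) s = q"
  shows "surv M (kofn_rv k n Z) s = Hf n k q"
proof -
  interpret prob_space M by (rule M)
  have rv: "Z i \<in> borel_measurable M" if "i < n" for i
    using ind that unfolding indep_vars_def by auto
  define S where "S = {A. A \<subseteq> {..<n} \<and> k \<le> card A}"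
  have finS: "finite S" unfolding S_def by (rule finite_subset[of _ "Pow {..<n}"]) auto
  define B where "B A i = (if i \<in> A then {s<..} else {..s::real})" for A :: "nat set" and i
  define E where "E A = (\<Inter>i\<in>{..<n}. Z i -` B A i \<inter> space M)" for A
  have "0 \<in> {..<n}" using k by simp
  then have ne: "{..<n} \<noteq> {}" by blast
  have E_eq: "E A = {\<omega>\<in>space M. {i. i < n \<and> s < Z i \<omega>} = A}" if "A \<subseteq> {..<n}" for A
    using that ne unfolding E_def B_def by (auto split: if_splits)
  have Esets: "E A \<in> sets M" for A
    unfolding E_def B_def using ne rv by (intro sets.finite_INT) auto
  have set_eq: "{\<omega>\<in>space M. s < kofn_rv k n Z \<omega>} = (\<Union>A\<in>S. E A)"
  proof -
    have "{\<omega>\<in>space M. s < kofn_rv k n Z \<omega>} = {\<omega>\<in>space M. k \<le> card {i. i < n \<and> s < Z i \<omega>}}"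
      unfolding kofn_rv_def using kofn_life_gt[OF k] by simp
    also have "\<dots> = (\<Union>A\<in>S. E A)"
      by (auto simp: S_def E_eq)
    finally show ?thesis .
  qed
  have disj: "disjoint_family_on E S"
    unfolding disjoint_family_on_def S_def by (auto simp: E_eq)
  have surv_i: "prob (Z i -` {s<..} \<inter> space M) = q" if "i < n" for i
  proof -
    have "Z i -` {s<..} \<inter> space M = {\<omega>\<in>space M. s < Z i \<omega>}" by auto
    then show ?thesis using q that by (simp add: surv_def)
  qed
  have surv_c: "prob (Z i -` {..s} \<inter> space M) = 1 - q" if "i < n" for i
  proof -
    have "Z i -` {..s} \<inter> space M = space M - (Z i -` {s<..} \<inter> space M)" by auto
    moreover have "Z i -` {s<..} \<inter> space M \<in> events" using rv[OF that] by measurable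
    ultimately show ?thesis using prob_compl surv_i[OF that] by simp
  qed
  have probE: "prob (E A) = q^card A * (1-q)^(n - card A)" if "A \<subseteq> {..<n}" for A
  proof -
    have "prob (E A) = (\<Prod>i\<in>{..<n}. prob (Z i -` B A i \<inter> space M))"
      unfolding E_def by (rule indep_varsD[OF ind ne]) (auto simp: B_def)
    also have "\<dots> = (\<Prod>i<n. if i \<in> A then q else 1 - q)"
      by (rule prod.cong) (auto simp: B_def surv_i surv_c)
    also have "\<dots> = q^card A * (1-q)^(n - card A)" by (rule prod_if_card[OF that])
    finally show ?thesis .
  qed
  have "surv M (kofn_rv k n Z) s = prob (\<Union>A\<in>S. E A)"
    unfolding surv_def set_eq by simp
  also have "\<dots> = (\<Sum>A\<in>S. prob (E A))"
    using finS Esets disj by (intro finite_measure_finite_Union) auto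
  also have "\<dots> = (\<Sum>A\<in>S. q^card A * (1-q)^(n - card A))"
    by (rule sum.cong) (auto simp: S_def probE)
  also have "\<dots> = Hf n k q" unfolding S_def by (rule sum_subsets_binom[OF k(2)])
  finally show ?thesis .
qed




lemma surv_density:
  assumes M: "prob_space M"
    and f0: "\<forall>x<0. f x = 0" and fpos: "\<forall>x\<ge>0. 0 < f x" and fc: "continuous_on {0..} f"
    and D: "distributed M lborel X (\<lambda>x. ennreal (f x))"
  shows "surv M X z = 1 - integral {0..z} f"
proof -
  interpret prob_space M by (rule M)
  have fnn: "0 \<le> f x" for x using f0 fpos by (cases "x < 0") (auto intro: less_imp_le)
  have Xm: "X \<in> borel_measurable M" using distributed_measurable[OF D] by simp
  have fm: "f \<in> borel_measurable borel"
    using distributed_real_measurable[OF _ D] fnn by simp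
  have fint: "f integrable_on {0..z}"
    by (rule integrable_continuous_interval) (rule continuous_on_subset[OF fc], auto)
  have em: "emeasure M (X -` {..z} \<inter> space M) = (\<integral>\<^sup>+x. ennreal (f x) * indicator {..z} x \<partial>lborel)"
    by (rule distributed_emeasure[OF D]) simp
  also have "\<dots> = (\<integral>\<^sup>+x. ennreal (f x * indicator {0..z} x) \<partial>lborel)"
    by (intro nn_integral_cong) (auto simp: indicator_def f0 not_le)
  also have "\<dots> = ennreal (integral {0..z} f)"
  proof (rule nn_integral_has_integral_lborel)
    show "(\<lambda>x. f x * indicator {0..z} x) \<in> borel_measurable borel" using fm by measurable
    show "0 \<le> f x * indicator {0..z} x" for x using fnn by (simp add: indicator_def)
    have "(f has_integral integral {0..z} f) {0..z}" using fint by (rule integrable_integral)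
    then have "((\<lambda>x. if x \<in> {0..z} then f x else 0) has_integral integral {0..z} f) UNIV"
      by (simp only: has_integral_restrict_UNIV)
    moreover have "(\<lambda>x. if x \<in> {0..z} then f x else 0) = (\<lambda>x. f x * indicator {0..z} x)"
      by (auto simp: indicator_def)
    ultimately show "((\<lambda>x. f x * indicator {0..z} x) has_integral integral {0..z} f) UNIV" by simp
  qed
  finally have "prob (X -` {..z} \<inter> space M) = integral {0..z} f"
    using integral_nonneg[OF fint] fnn by (simp add: measure_def)
  moreover have "{\<omega>\<in>space M. z < X \<omega>} = space M - (X -` {..z} \<inter> space M)" by auto
  moreover have "X -` {..z} \<inter> space M \<in> events" using Xm by measurable
  ultimately show ?thesis unfolding surv_def using prob_compl by simp
qed

lemma Fint_right_deriv:
  fixes f :: "real \<Rightarrow> real"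
  assumes fc: "continuous_on {0..} f" and z: "0 \<le> z"
  shows "((\<lambda>u. integral {0..u} f) has_real_derivative f z) (at_right z)"
proof -
  have "((\<lambda>u. integral {0..u} f) has_real_derivative f z) (at z within {0..z+1})"
    using z by (intro integral_has_real_derivative continuous_on_subset[OF fc]) auto
  then have "((\<lambda>u. integral {0..u} f) has_real_derivative f z) (at z within {z..z+1})"
    by (rule DERIV_subset) (use z in auto)
  moreover have "at z within {z..z+1} = at_right z" by (rule at_within_Icc_at_right) simp
  ultimately show ?thesis by simp
qed

lemma Fint_deriv:
  fixes f :: "real \<Rightarrow> real"
  assumes fc: "continuous_on {0..} f" and z: "0 < z"
  shows "((\<lambda>u. integral {0..u} f) has_real_derivative f z) (at z)"
proof -
  have "((\<lambda>u. integral {0..u} f) has_real_derivative f z) (at z within {0..z+1})"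
    using z by (intro integral_has_real_derivative continuous_on_subset[OF fc]) auto
  moreover have "at z within {0..z+1} = at z" using z by (intro at_within_interior) auto
  ultimately show ?thesis by simp
qed

lemma Fint_strict:
  fixes f :: "real \<Rightarrow> real"
  assumes fc: "continuous_on {0..} f" and fpos: "\<forall>x\<ge>0. 0 < f x" and z: "0 \<le> z"
  shows "integral {0..z} f < integral {0..z+1} f"
proof (rule DERIV_pos_imp_increasing_open[where f="\<lambda>u. integral {0..u} f"])
  show "z < z + 1" by simp
  show "\<exists>y. ((\<lambda>u. integral {0..u} f) has_real_derivative y) (at x) \<and> 0 < y" if "z < x" "x < z + 1" for x
    using Fint_deriv[OF fc, of x] fpos that z by auto
  have "continuous_on {0..z+1} (\<lambda>u. integral {0..u} f)"
    by (intro indefinite_integral_continuous_1 integrable_continuous_interval continuous_on_subset[OF fc]) auto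
  then show "continuous_on {z..z+1} (\<lambda>u. integral {0..u} f)"
    by (rule continuous_on_subset) (use z in auto)
qed

lemma the_right_deriv:
  assumes "(F has_real_derivative D) (at_right x)"
  shows "(THE D. (F has_real_derivative D) (at_right (x::real))) = D"
proof (rule the_equality)
  show "(F has_real_derivative D) (at_right x)" by (rule assms)
  fix D' assume "(F has_real_derivative D') (at_right x)"
  then show "D' = D" using assms
    by (intro vector_derivative_unique_within[of x "{x<..}" F])
       (auto simp: has_real_derivative_iff_has_vector_derivative trivial_limit_at_right_real)
qed




theorem corollary5p1:
  fixes M :: "'a measure" and N :: "'b measure"
    and X :: "nat \<Rightarrow> 'a \<Rightarrow> real" and Y :: "nat \<Rightarrow> 'b \<Rightarrow> real"
    and f :: "real \<Rightarrow> real" and k n :: nat and t :: real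
  assumes "prob_space M" and "prob_space N"
    and "1 \<le> k" and "k \<le> n"
    and "\<forall>x<0. f x = 0" and "\<forall>x\<ge>0. 0 < f x" and "continuous_on {0..} f"
    and "\<forall>i<n. distributed M lborel (X i) (\<lambda>x. ennreal (f x))"
    and "prob_space.indep_vars M (\<lambda>_. borel) X {..<n}"
    and "0 \<le> t"
    and "prob_space.indep_vars N (\<lambda>_. borel) Y {..<n}"
    and "\<forall>i<n. \<forall>x. surv N (Y i) x = resid_surv M (X i) t x"
  shows "c_order (surv N (kofn_rv k n Y)) (resid_surv M (kofn_rv k n X) t)"
proof -
  note PM = assms(1) and PN = assms(2) and k = assms(3,4) and f0 = assms(5) and fpos = assms(6)
    and fc = assms(7) and distr = assms(8) and indX = assms(9) and t0 = assms(10)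
    and indY = assms(11) and YX = assms(12)
  interpret M: prob_space M by (rule PM)
  interpret N: prob_space N by (rule PN)
  have n0: "0 < n" using k by simp
  define S where "S z = 1 - integral {0..z} f" for z
  have survX: "surv M (X i) z = S z" if "i < n" for i z
    unfolding S_def using surv_density[OF PM f0 fpos fc] distr that by blast
  have Xm: "X i \<in> borel_measurable M" if "i < n" for i
    using distributed_measurable[of M lborel "X i"] distr that by auto
  have S_ge0: "0 \<le> S z" for z
    using survX[OF n0, of z] measure_nonneg[of M "{\<omega>\<in>space M. z < X 0 \<omega>}"] by (simp add: surv_def)
  have S_le1: "S z \<le> 1" for z
    using survX[OF n0, of z] M.prob_le_1[of "{\<omega>\<in>space M. z < X 0 \<omega>}"] by (simp add: surv_def)
  have S_anti: "S b \<le> S a" if "a \<le> b" for a b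
  proof -
    have "{\<omega>\<in>space M. b < X 0 \<omega>} \<subseteq> {\<omega>\<in>space M. a < X 0 \<omega>}" using that by auto
    moreover have "{\<omega>\<in>space M. a < X 0 \<omega>} \<in> sets M" using Xm[OF n0] by measurable
    ultimately have "M.prob {\<omega>\<in>space M. b < X 0 \<omega>} \<le> M.prob {\<omega>\<in>space M. a < X 0 \<omega>}"
      by (intro M.finite_measure_mono)
    then show ?thesis using survX[OF n0, of a] survX[OF n0, of b] by (simp add: surv_def)
  qed
  have S_pos: "0 < S z" for z
  proof (cases "z < 0")
    case True
    then have "{0..z} = ({}::real set)" by auto
    then show ?thesis by (simp add: S_def)
  next
    case False
    then have "integral {0..z} f < integral {0..z+1} f" using Fint_strict[OF fc fpos] by simp
    then show ?thesis using S_ge0[of "z+1"] by (simp add: S_def)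
  qed
  define c where "c = S t"
  have c: "0 < c" "c \<le> 1" using S_pos S_le1 by (auto simp: c_def)
  define G where "G x = S (max t (t+x)) / c" for x
  have resid_eq: "resid_surv L W t x = surv L W (max t (t+x)) / surv L W t" for L :: "'c measure" and W x
  proof -
    have "{\<omega>\<in>space L. t + x < W \<omega> \<and> t < W \<omega>} = {\<omega>\<in>space L. max t (t+x) < W \<omega>}" by auto
    then show ?thesis by (simp add: resid_surv_def surv_def)
  qed
  have survY: "\<forall>i<n. surv N (Y i) x = G x" for x
    using YX survX by (simp add: resid_eq G_def c_def)
  have S1: "surv N (kofn_rv k n Y) = (\<lambda>x. Hf n k (G x))"
    using kofn_surv[OF PN indY k survY] by (intro ext) simp
  have SX: "surv M (kofn_rv k n X) z = Hf n k (S z)" for z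
    using kofn_surv[OF PM indX k] survX by simp
  have S2: "resid_surv M (kofn_rv k n X) t = (\<lambda>x. Hf n k (S (max t (t+x))) / Hf n k c)"
    by (intro ext) (simp add: resid_eq SX c_def)
  have Hc: "0 < Hf n k c" using H_pos[OF k(2) c] .
  have fpos': "0 < f (t+x)" if "0 \<le> x" for x using fpos that t0 by simp
  have ratio: "hazard (surv N (kofn_rv k n Y)) x / hazard (resid_surv M (kofn_rv k n X) t) x
      = Phi n k c (S (t+x))" if x0: "0 \<le> x" for x
  proof -
    have img: "(\<lambda>y. t+y) ` {x<..} = {t+x<..}"
      by (auto intro: image_eqI[where x="_ - t"])
    have dS0: "(S has_real_derivative 0 - f (t+x)) (at_right (t+x))"
      unfolding S_def[abs_def] using x0 t0 by (intro derivative_intros Fint_right_deriv[OF fc]) auto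
    have dS: "((\<lambda>y. S (t+y)) has_real_derivative - f (t+x)) (at_right x)"
    proof -
      have "((\<lambda>y. t+y) has_real_derivative 1) (at x within {x<..})"
        by (intro derivative_eq_intros) auto
      from DERIV_image_chain[of S, OF _ this] dS0 img
      show ?thesis by (simp add: o_def)
    qed
    have ev: "\<forall>\<^sub>F y in at_right x. max t (t+y) = t+y"
      using eventually_at_right_less[of x] by eventually_elim (use x0 in auto)
    have dG: "(G has_real_derivative - f (t+x) / c) (at_right x)"
    proof -
      have "((\<lambda>y. S (t+y) / c) has_real_derivative - f (t+x) / c) (at_right x)"
        by (rule DERIV_cdivide[OF dS])
      moreover have "(G has_real_derivative - f (t+x) / c) (at_right x) \<longleftrightarrow>
          ((\<lambda>y. S (t+y) / c) has_real_derivative - f (t+x) / c) (at_right x)"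
      proof (rule has_field_derivative_cong_eventually)
        show "\<forall>\<^sub>F y in at_right x. G y = S (t+y) / c" using ev by eventually_elim (simp add: G_def)
        show "G x = S (t+x) / c" using x0 by (simp add: G_def)
      qed
      ultimately show ?thesis by simp
    qed
    have Gx: "G x = S (t+x) / c" using x0 by (simp add: G_def)
    have d1: "((\<lambda>x. Hf n k (G x)) has_real_derivative hf n k (G x) * (- f (t+x) / c)) (at_right x)"
      by (rule DERIV_chain2[OF H_deriv[OF k] dG])
    have d2: "((\<lambda>x. Hf n k (S (max t (t+x))) / Hf n k c) has_real_derivative
        hf n k (S (t+x)) * (- f (t+x)) / Hf n k c) (at_right x)"
    proof -
      have "((\<lambda>y. Hf n k (S (t+y)) / Hf n k c) has_real_derivative
          hf n k (S (t+x)) * (- f (t+x)) / Hf n k c) (at_right x)"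
        by (rule DERIV_cdivide[OF DERIV_chain2[OF H_deriv[OF k] dS]])
      moreover have "((\<lambda>x. Hf n k (S (max t (t+x))) / Hf n k c) has_real_derivative
          hf n k (S (t+x)) * (- f (t+x)) / Hf n k c) (at_right x) \<longleftrightarrow>
          ((\<lambda>y. Hf n k (S (t+y)) / Hf n k c) has_real_derivative
          hf n k (S (t+x)) * (- f (t+x)) / Hf n k c) (at_right x)"
      proof (rule has_field_derivative_cong_eventually)
        show "\<forall>\<^sub>F y in at_right x. Hf n k (S (max t (t+y))) / Hf n k c = Hf n k (S (t+y)) / Hf n k c"
          using ev by eventually_elim simp
        show "Hf n k (S (max t (t+x))) / Hf n k c = Hf n k (S (t+x)) / Hf n k c" using x0 by simp
      qed
      ultimately show ?thesis by simp
    qed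
    define p where "p = S (t+x)"
    have p: "0 < p" "p \<le> c" using S_pos S_anti[of t "t+x"] x0 by (auto simp: p_def c_def)
    have p1: "0 < p / c" "p / c \<le> 1" using p c by (auto simp: field_simps)
    have Hp: "0 < Hf n k p" "0 < Hf n k (p/c)"
      using H_pos[OF k(2)] p p1 c by auto
    have h1: "hazard (surv N (kofn_rv k n Y)) x = (hf n k (p/c) * f (t+x) / c) / Hf n k (p/c)"
      unfolding S1 hazard_def dens_of_surv_def the_right_deriv[OF d1] Gx p_def by simp
    have h2: "hazard (resid_surv M (kofn_rv k n X) t) x
        = (hf n k p * f (t+x) / Hf n k c) / (Hf n k p / Hf n k c)"
      unfolding S2 hazard_def dens_of_surv_def the_right_deriv[OF d2] p_def using x0 by simp
    show ?thesis
    proof (cases "hf n k p = 0")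
      case True
      then show ?thesis unfolding h1 h2 Phi_def p_def[symmetric] by simp
    next
      case False
      then show ?thesis unfolding h1 h2 Phi_def p_def[symmetric]
        using Hp Hc c fpos'[OF x0] by (simp add: field_simps)
    qed
  qed
  show ?thesis
    unfolding c_order_def
  proof (rule mono_onI)
    fix x y :: real assume xy: "x \<in> {0..}" "y \<in> {0..}" "x \<le> y"
    have "Phi n k c (S (t+x)) \<le> Phi n k c (S (t+y))"
      using Phi_anti[OF k c, of "S (t+y)" "S (t+x)"] S_pos S_anti[of "t+x" "t+y"] S_anti[of t "t+x"] xy
      by (simp add: c_def)
    then show "hazard (surv N (kofn_rv k n Y)) x / hazard (resid_surv M (kofn_rv k n X) t) x
        \<le> hazard (surv N (kofn_rv k n Y)) y / hazard (resid_surv M (kofn_rv k n X) t) y"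
      using ratio xy by simp
  qed
qed


end
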